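(* Assume the setting described in the context, and fix $x=(x_R,x_T)\in\mathbb{R}\times\mathbb{R}^2$ and an index $i$. Let $j=\pi(x,i)$, and suppose $a_i$ and $a_j$ lie on the same curve $\gamma$ of the environment, with arc-length abscissae $s_i,s_j$. Define the approximation error $$\psi_i:=(a_{\pi(0,i)}-a_{\pi(x,i)})\cdot n_i=(a_i-a_j)\cdot n_i .$$ Then $$(a_i+d_i(x)-a_{\pi(x,i)})\cdot n_i=(a_i+d_i(x)-a_{\pi(0,i)})\cdot n_i+\psi_i .$$ Hence the true ICP cost $\sum_i[(a_i+d_i(x)-a_{\pi(x,i)})\cdot n_i]^2$ equals $\sum_i[(a_i+d_i(x)-a_{\pi(0,i)})\cdot n_i+\psi_i]^2$. Moreover, if $\kappa\,|s_i-s_j|\le 1$, then $$|\psi_i|\le 8\,\kappa\,\|x_R\times a_i+x_T\|^2 .$$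
   Context: 2D setting. The environment is a finite union of pairwise disjoint $C^2$ curves in $\mathbb{R}^2$. Each curve $\gamma$ is parametrized by arc length $s$, so $\|\gamma'(s)\|=1$, and has curvature bounded by $\kappa\ge 0$, i.e. $\|\gamma''(s)\|\le\kappa$ for all $s$. A point cloud $a_1,\dots,a_N\in\mathbb{R}^2$ consists of distinct points on these curves. Write $a_k=\gamma(s_k)$, where $s_k$ is the arc-length abscissa of $a_k$ on the curve containing it. For each $i$, $n_i$ is a unit normal vector to that curve at $a_i$, so $n_i\cdot\gamma'(s_i)=0$. For a motion parameter $x=(x_R,x_T)\in\mathbb{R}\times\mathbb{R}^2$, the linearized displacement of $a_i$ is $d_i(x):=x_R\times a_i+x_T$. Here, for a scalar $x_R$ and $a=(a^1,a^2)$, $x_R\times a:=x_R(-a^2,a^1)$. $\pi(x,i)$ denotes an index $j\in\{1,\dots,N\}$ minimizing $\|a_i+d_i(x)-a_j\|$, i.e. closest-point matching of the displaced point to the original cloud. Note $\pi(0,i)=i$. *)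

theory Defs
  imports "HOL-Analysis.Analysis"
begin

type_synonym pt = "real \<times> real"

text \<open>Scalar-times-point cross product: x_R \<times> (a1,a2) = x_R (-a2, a1).\<close>
definition rot :: "real \<Rightarrow> pt \<Rightarrow> pt" where
  "rot r p = (- r * snd p, r * fst p)"

definition disp :: "real \<times> pt \<Rightarrow> pt \<Rightarrow> pt" where
  "disp x p = rot (fst x) p + snd x"

definition arc_curve :: "real \<Rightarrow> real set \<Rightarrow> (real \<Rightarrow> pt) \<Rightarrow> (real \<Rightarrow> pt) \<Rightarrow> (real \<Rightarrow> pt) \<Rightarrow> bool" where
  "arc_curve kappa I g g1 g2 \<longleftrightarrow>
     is_interval I \<and>
     (\<forall>t\<in>I. (g has_vector_derivative g1 t) (at t within I)) \<and>
     (\<forall>t\<in>I. (g1 has_vector_derivative g2 t) (at t within I)) \<and>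
     continuous_on I g2 \<and>
     (\<forall>t\<in>I. norm (g1 t) = 1) \<and>
     (\<forall>t\<in>I. norm (g2 t) \<le> kappa)"

definition closest_matching :: "nat \<Rightarrow> (nat \<Rightarrow> pt) \<Rightarrow> (real \<times> pt \<Rightarrow> nat \<Rightarrow> nat) \<Rightarrow> bool" where
  "closest_matching N a p \<longleftrightarrow>
     (\<forall>x. \<forall>i<N. p x i < N \<and>
        (\<forall>j<N. norm (a i + disp x (a i) - a (p x i)) \<le> norm (a i + disp x (a i) - a j)))"

end

theory Submission
  imports Defs
begin

lemma taylor_fwd:
  fixes g gd gdd :: "real \<Rightarrow> 'a::banach"
  assumes ab: "a \<le> b"
    and d1: "\<And>t. t \<in> {a..b} \<Longrightarrow> (g has_vector_derivative gd t) (at t within {a..b})"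
    and d2: "\<And>t. t \<in> {a..b} \<Longrightarrow> (gd has_vector_derivative gdd t) (at t within {a..b})"
    and bd: "\<And>t. t \<in> {a..b} \<Longrightarrow> norm (gdd t) \<le> K"
  shows "norm (g b - g a - (b - a) *\<^sub>R gd a) \<le> K * (b - a)\<^sup>2 / 2"
proof -
  define Df where "Df = (\<lambda>m::nat. case m of 0 \<Rightarrow> g | Suc 0 \<Rightarrow> gd | _ \<Rightarrow> gdd)"
  have Df: "\<And>m t. m < 2 \<Longrightarrow> a \<le> t \<Longrightarrow> t \<le> b \<Longrightarrow>
    (Df m has_vector_derivative Df (Suc m) t) (at t within {a..b})"
  proof -
    fix m :: nat and t assume "m < 2" "a \<le> t" "t \<le> b"
    then have "m = 0 \<or> m = 1" by auto
    then show "(Df m has_vector_derivative Df (Suc m) t) (at t within {a..b})"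
      using d1 d2 \<open>a \<le> t\<close> \<open>t \<le> b\<close> by (auto simp: Df_def numeral_2_eq_2)
  qed
  have D0: "Df 0 = g" by (simp add: Df_def)
  note T = Taylor_integral[of 2 Df g a b, OF _ D0 Df ab] Taylor_integrable[of 2 Df g a b, OF _ D0 Df ab]
  have eq: "g b - g a - (b - a) *\<^sub>R gd a = integral {a..b} (\<lambda>x. (b - x) *\<^sub>R gdd x)"
    using T(1) by (simp add: Df_def numeral_2_eq_2 lessThan_Suc)
  have int1: "(\<lambda>x. (b - x) *\<^sub>R gdd x) integrable_on {a..b}"
    using T(2) by (simp add: Df_def numeral_2_eq_2)
  have hi: "((\<lambda>x. K * (b - x)) has_integral K * (b - a)\<^sup>2 / 2) {a..b}"
  proof -
    have "((\<lambda>x. K * (b - x)) has_integral ((\<lambda>x. - K * (b - x)\<^sup>2 / 2) b - (\<lambda>x. - K * (b - x)\<^sup>2 / 2) a)) {a..b}"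
      apply (rule fundamental_theorem_of_calculus[OF ab])
      apply (auto intro!: derivative_eq_intros simp: has_real_derivative_iff_has_vector_derivative[symmetric])
      apply (simp add: field_simps)
      done
    then show ?thesis by simp
  qed
  have "norm (integral {a..b} (\<lambda>x. (b - x) *\<^sub>R gdd x)) \<le> integral {a..b} (\<lambda>x. K * (b - x))"
  proof (rule integral_norm_bound_integral[OF int1])
    show "(\<lambda>x. K * (b - x)) integrable_on {a..b}" using hi by blast
    fix x assume "x \<in> {a..b}"
    then show "norm ((b - x) *\<^sub>R gdd x) \<le> K * (b - x)"
      using bd[of x] by (auto simp: mult.commute[of K] intro!: mult_left_mono)
  qed
  then show ?thesis by (simp only: integral_unique[OF hi] eq[symmetric])
qed

lemma deriv_refl:
  fixes g g1 :: "real \<Rightarrow> 'a::real_normed_vector"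
  assumes "(g has_vector_derivative g1 (-t)) (at (-t) within S)"
    and "uminus ` T \<subseteq> S"
  shows "((\<lambda>t. g (-t)) has_vector_derivative - g1 (-t)) (at t within T)"
proof -
  have "(uminus has_vector_derivative (-1::real)) (at t within T)"
    by (auto intro!: derivative_eq_intros)
  moreover have "(g has_vector_derivative g1 (-t)) (at (uminus t) within uminus ` T)"
    using has_vector_derivative_within_subset[OF assms(1) assms(2)] by simp
  ultimately have "((g \<circ> uminus) has_vector_derivative (-1::real) *\<^sub>R g1 (-t)) (at t within T)"
    by (rule vector_diff_chain_within)
  then show ?thesis by (simp add: o_def)
qed

lemma taylor_gen:
  fixes g g1 g2 :: "real \<Rightarrow> 'a::banach"
  assumes iv: "is_interval I"
    and d1: "\<And>t. t \<in> I \<Longrightarrow> (g has_vector_derivative g1 t) (at t within I)"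
    and d2: "\<And>t. t \<in> I \<Longrightarrow> (g1 has_vector_derivative g2 t) (at t within I)"
    and bd: "\<And>t. t \<in> I \<Longrightarrow> norm (g2 t) \<le> K"
    and u: "u \<in> I" and v: "v \<in> I"
  shows "norm (g v - g u - (v - u) *\<^sub>R g1 u) \<le> K * (v - u)\<^sup>2 / 2"
proof (cases "u \<le> v")
  case True
  have sub: "{u..v} \<subseteq> I" using iv u v unfolding is_interval_1 by (meson atLeastAtMost_iff subsetI)
  show ?thesis
  proof (rule taylor_fwd[OF True, where gdd=g2])
    fix t assume t: "t \<in> {u..v}"
    then have tI: "t \<in> I" using sub by blast
    show "(g has_vector_derivative g1 t) (at t within {u..v})"
      by (rule has_vector_derivative_within_subset[OF d1[OF tI] sub])
    show "(g1 has_vector_derivative g2 t) (at t within {u..v})"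
      by (rule has_vector_derivative_within_subset[OF d2[OF tI] sub])
    show "norm (g2 t) \<le> K" by (rule bd[OF tI])
  qed
next
  case False
  have sub: "{v..u} \<subseteq> I" using iv u v unfolding is_interval_1 by (meson atLeastAtMost_iff subsetI)
  have sub2: "uminus ` {-u..-v} \<subseteq> I" using sub by auto
  have "norm ((\<lambda>t. g (-t)) (-v) - (\<lambda>t. g (-t)) (-u) - (-v - -u) *\<^sub>R (\<lambda>t. - g1 (-t)) (-u))
       \<le> K * (-v - -u)\<^sup>2 / 2"
  proof (rule taylor_fwd[where gdd="\<lambda>t. g2 (-t)"])
    show "- u \<le> - v" using False by simp
    fix t assume t: "t \<in> {-u..-v}"
    then have "-t \<in> I" using sub by auto
    show "((\<lambda>t. g (- t)) has_vector_derivative - g1 (- t)) (at t within {- u..- v})"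
      by (rule deriv_refl[of g g1 t I "{-u..-v}", OF d1[OF \<open>-t \<in> I\<close>] sub2])
    have "((\<lambda>t. g1 (- t)) has_vector_derivative - g2 (- t)) (at t within {- u..- v})"
      by (rule deriv_refl[of g1 g2 t I "{-u..-v}", OF d2[OF \<open>-t \<in> I\<close>] sub2])
    then show "((\<lambda>t. - g1 (- t)) has_vector_derivative g2 (- t)) (at t within {- u..- v})"
      using has_vector_derivative_minus by fastforce
    show "norm (g2 (- t)) \<le> K" using bd \<open>-t \<in> I\<close> by simp
  qed
  moreover have "(-v - -u)\<^sup>2 = (v-u)\<^sup>2" by (simp add: power2_eq_square algebra_simps)
  moreover have "g (- (-v)) - g (- (-u)) - (-v - -u) *\<^sub>R (- g1 (- (-u))) = g v - g u - (v-u) *\<^sub>R g1 u"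
    by (simp add: algebra_simps)
  ultimately show ?thesis by (simp only:)
qed

theorem mainTheorem2:
  fixes kappa :: real
    and M :: nat
    and I :: "nat \<Rightarrow> real set"
    and \<gamma> \<gamma>1 \<gamma>2 :: "nat \<Rightarrow> real \<Rightarrow> pt"
    and N :: nat
    and a :: "nat \<Rightarrow> pt"
    and c :: "nat \<Rightarrow> nat"
    and s :: "nat \<Rightarrow> real"
    and n :: "nat \<Rightarrow> pt"
    and p :: "real \<times> pt \<Rightarrow> nat \<Rightarrow> nat"
    and x :: "real \<times> pt"
    and i :: nat
  assumes kappa_nonneg: "kappa \<ge> 0"
    and curves: "\<And>m. m < M \<Longrightarrow> arc_curve kappa (I m) (\<gamma> m) (\<gamma>1 m) (\<gamma>2 m)"
    and disjoint: "\<And>m m'. m < M \<Longrightarrow> m' < M \<Longrightarrow> m \<noteq> m' \<Longrightarrow>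
                      \<gamma> m ` I m \<inter> \<gamma> m' ` I m' = {}"
    and distinct_pts: "inj_on a {..<N}"
    and on_curve: "\<And>k. k < N \<Longrightarrow> c k < M \<and> s k \<in> I (c k) \<and> a k = \<gamma> (c k) (s k)"
    and normals: "\<And>k. k < N \<Longrightarrow> norm (n k) = 1 \<and> inner (n k) (\<gamma>1 (c k) (s k)) = 0"
    and matching: "closest_matching N a p"
    and i_lt: "i < N"
    and same_curve: "c (p x i) = c i"
  shows "(let \<psi> = (\<lambda>k. inner (a (p 0 k) - a (p x k)) (n k)) in
           inner (a i + disp x (a i) - a (p x i)) (n i)
             = inner (a i + disp x (a i) - a (p 0 i)) (n i) + \<psi> i
         \<and> (\<Sum>k<N. (inner (a k + disp x (a k) - a (p x k)) (n k))\<^sup>2)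
             = (\<Sum>k<N. (inner (a k + disp x (a k) - a (p 0 k)) (n k) + \<psi> k)\<^sup>2)
         \<and> (kappa * \<bar>s i - s (p x i)\<bar> \<le> 1 \<longrightarrow>
              \<bar>\<psi> i\<bar> \<le> 8 * kappa * (norm (disp x (a i)))\<^sup>2))"
proof -
  define \<psi> where "\<psi> = (\<lambda>k. inner (a (p 0 k) - a (p x k)) (n k))"
  have lin: "\<And>k. inner (a k + disp x (a k) - a (p x k)) (n k)
      = inner (a k + disp x (a k) - a (p 0 k)) (n k) + \<psi> k"
    by (simp add: \<psi>_def inner_diff_left)
  define j where "j = p x i"
  have jN: "j < N" using matching i_lt unfolding closest_matching_def j_def by blast
  have d0: "disp 0 (a i) = 0" by (simp add: disp_def rot_def zero_prod_def)
  have p0N: "p 0 i < N" using matching i_lt unfolding closest_matching_def by blast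
  have "norm (a i + disp 0 (a i) - a (p 0 i)) \<le> norm (a i + disp 0 (a i) - a i)"
    using matching i_lt unfolding closest_matching_def by blast
  then have ap0: "a (p 0 i) = a i" using d0 by simp
  have clo: "norm (a i + disp x (a i) - a j) \<le> norm (a i + disp x (a i) - a i)"
    using matching i_lt unfolding closest_matching_def j_def by blast
  define d where "d = disp x (a i)"
  have aij: "norm (a j - a i) \<le> 2 * norm d"
  proof -
    have "norm (a j - a i) \<le> norm (a i + d - a j) + norm d"
      using norm_triangle_ineq4[of "a i + d - a j" d] by (simp add: norm_minus_commute algebra_simps)
    then show ?thesis using clo by (simp add: d_def)
  qed
  have bound: "kappa * \<bar>s i - s j\<bar> \<le> 1 \<Longrightarrow> \<bar>\<psi> i\<bar> \<le> 8 * kappa * (norm d)\<^sup>2"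
  proof -
    assume kh: "kappa * \<bar>s i - s j\<bar> \<le> 1"
    define m where "m = c i"
    have mM: "m < M" and si: "s i \<in> I m" and ai: "a i = \<gamma> m (s i)"
      using on_curve[OF i_lt] by (auto simp: m_def)
    have sj: "s j \<in> I m" and aj: "a j = \<gamma> m (s j)"
      using on_curve[OF jN] same_curve by (auto simp: m_def j_def)
    have ac: "arc_curve kappa (I m) (\<gamma> m) (\<gamma>1 m) (\<gamma>2 m)" using curves[OF mM] .
    define h where "h = s j - s i"
    define R where "R = a j - a i - h *\<^sub>R \<gamma>1 m (s i)"
    have R: "norm R \<le> kappa * h\<^sup>2 / 2"
      unfolding R_def h_def ai aj
      apply (rule taylor_gen[of "I m"])
      using ac si sj by (auto simp: arc_curve_def)
    have u1: "norm (\<gamma>1 m (s i)) = 1" using ac si by (auto simp: arc_curve_def)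
    have nn: "norm (n i) = 1" and no: "inner (n i) (\<gamma>1 m (s i)) = 0"
      using normals[OF i_lt] by (auto simp: m_def)
    have psi: "\<psi> i = - inner R (n i)"
      using no by (simp add: \<psi>_def ap0 R_def j_def inner_diff_left inner_commute algebra_simps)
    have psib: "\<bar>\<psi> i\<bar> \<le> norm R"
      using psi Cauchy_Schwarz_ineq2[of R "n i"] nn by simp
    have kh': "kappa * \<bar>h\<bar> \<le> 1" using kh by (simp add: h_def abs_minus_commute)
    have "\<bar>h\<bar> = norm (h *\<^sub>R \<gamma>1 m (s i))" using u1 by simp
    also have "\<dots> \<le> norm (a j - a i) + norm R"
      using norm_triangle_ineq4[of "a j - a i" R] by (simp add: R_def)
    finally have "\<bar>h\<bar> \<le> norm (a j - a i) + kappa * h\<^sup>2 / 2" using R by linarith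
    moreover have "kappa * h\<^sup>2 / 2 \<le> \<bar>h\<bar> / 2"
    proof -
      have "kappa * h\<^sup>2 = (kappa * \<bar>h\<bar>) * \<bar>h\<bar>" by (simp add: power2_eq_square abs_mult_self_eq)
      also have "\<dots> \<le> 1 * \<bar>h\<bar>" by (rule mult_right_mono[OF kh']) simp
      finally show ?thesis by simp
    qed
    ultimately have "\<bar>h\<bar> \<le> 4 * norm d" using aij by linarith
    then have "h\<^sup>2 \<le> (4 * norm d)\<^sup>2"
      by (metis abs_ge_zero power2_abs power_mono)
    then have "kappa * h\<^sup>2 / 2 \<le> kappa * (4 * norm d)\<^sup>2 / 2"
      using mult_left_mono[OF \<open>h\<^sup>2 \<le> (4 * norm d)\<^sup>2\<close> kappa_nonneg] by simp
    then show ?thesis using psib R by (simp add: power2_eq_square)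
  qed
  show ?thesis
    unfolding Let_def \<psi>_def[symmetric]
    using lin bound by (simp add: d_def j_def)
qed

end
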